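(* Let $r$ be even with $2\le r\le n$, let $\mathbf{x}_1,\ldots,\mathbf{x}_r\in\mathbb{F}_2^n$ be linearly independent, and let $A\in\mathrm{SGL}_n(\mathbb{F}_2)$ satisfy $\mathbf{x}_i^{\top}A^{-1}\mathbf{x}_j=1$ for all $i,j\le r$. Then there exist $\mathbf{x}_{r+1}\in\mathbb{F}_2^n$ and $s\in\{1,\ldots,r\}$ such that $\mathbf{x}_s^{\top}A^{-1}\mathbf{x}_{r+1}=1$ and $\mathbf{x}_t^{\top}A^{-1}\mathbf{x}_{r+1}=0$ for all $t\in\{1,\ldots,r+1\}\setminus\{s\}$.
   Context: $\mathrm{SGL}_n(\mathbb{F}_2)$ is the set of invertible symmetric $n\times n$ matrices over the binary field $\mathbb{F}_2$. *)

theory Defs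
  imports "HOL-Analysis.Analysis" "HOL-Library.Z2"
begin

definition bilin :: "'a::comm_ring_1 ^ 'n \<Rightarrow> 'a ^ 'n ^ 'n \<Rightarrow> 'a ^ 'n \<Rightarrow> 'a" where
  "bilin x M y = (\<Sum>i\<in>UNIV. x $ i * ((M *v y) $ i))"

definition SGL :: "(bit ^ 'n ^ 'n) set" where
  "SGL = {A. invertible A \<and> transpose A = A}"

end

theory Submission
  imports Defs
begin

definition dt :: "bit ^ 'n \<Rightarrow> bit ^ 'n \<Rightarrow> bit" where
  "dt u y = (\<Sum>k\<in>UNIV. u $ k * y $ k)"

lemma bit_add_self: "(a::bit) + a = 0"
  by (cases a) simp_all

lemma additive_dt:
  fixes g :: "bit ^ 'n \<Rightarrow> bit"
  assumes add: "\<And>a b. g (a + b) = g a + g b"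
  shows "g w = dt w (\<chi> k. g (axis k 1))"
proof -
  have g0: "g 0 = 0" using add[of 0 0] by (metis add.right_neutral add_left_cancel)
  have sc: "g (c *s a) = c * g a" for c a
    by (cases c) (simp_all add: g0)
  have gs: "g (\<Sum>i\<in>F. f i) = (\<Sum>i\<in>F. g (f i))" if "finite F" for F and f :: "'n \<Rightarrow> bit ^ 'n"
    using that by (induction F rule: finite_induct) (simp_all add: g0 add)
  have "g w = g (\<Sum>i\<in>UNIV. w $ i *s axis i 1)" by (simp add: basis_expansion)
  also have "\<dots> = (\<Sum>i\<in>UNIV. w $ i * g (axis i 1))"
    by (simp only: gs[OF finite] sc)
  finally show ?thesis by (simp add: dt_def)
qed

lemma dual_exists:
  fixes S :: "(bit ^ 'n) set"
  assumes ind: "vec.independent S" and sS: "s \<in> S"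
  shows "\<exists>y. dt s y = 1 \<and> (\<forall>t\<in>S - {s}. dt t y = 0)"
proof -
  define Bs where "Bs = vec.extend_basis S"
  have SB: "S \<subseteq> Bs" and iB: "vec.independent Bs" and sB: "vec.span Bs = UNIV"
    using vec.extend_basis_superset[OF ind] vec.independent_extend_basis[OF ind]
      vec.span_extend_basis[OF ind] by (auto simp: Bs_def)
  define g where "g w = vec.representation Bs w s" for w
  have add: "g (a + b) = g a + g b" for a b
    unfolding g_def using vec.representation_add[OF iB] sB by auto
  have rb: "t \<in> Bs \<Longrightarrow> g t = (if t = s then 1 else 0)" for t
    unfolding g_def using vec.representation_basis[OF iB] by simp
  define y where "y = (\<chi> k. g (axis k 1))"
  have "g w = dt w y" for w unfolding y_def by (rule additive_dt[OF add])
  then show ?thesis using rb SB sS by (metis DiffE insertCI subsetD)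
qed

lemma inv_props:
  fixes A :: "bit ^ 'n ^ 'n"
  assumes "A \<in> SGL"
  shows "A ** matrix_inv A = mat 1" "matrix_inv A ** A = mat 1"
    "transpose (matrix_inv A) = matrix_inv A"
proof -
  have inv: "invertible A" and tA: "transpose A = A" using assms by (auto simp: SGL_def)
  have *: "A ** matrix_inv A = mat 1 \<and> matrix_inv A ** A = mat 1"
    using inv unfolding invertible_def matrix_inv_def by (rule someI_ex)
  then show "A ** matrix_inv A = mat 1" "matrix_inv A ** A = mat 1" by auto
  let ?B = "matrix_inv A"
  have "transpose ?B ** A = mat 1"
    by (metis * tA matrix_transpose_mul transpose_mat)
  then have "transpose ?B = transpose ?B ** (A ** ?B)" using * by simp
  also have "\<dots> = ?B" by (simp add: matrix_mul_assoc \<open>transpose ?B ** A = mat 1\<close>)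
  finally show "transpose ?B = ?B" .
qed

lemma bilin_dt:
  fixes B :: "bit ^ 'n ^ 'n"
  assumes "transpose B = B"
  shows "bilin u B y = dt (B *v u) y"
proof -
  have sym: "B $ i $ j = B $ j $ i" for i j
    using arg_cong[OF assms, of "\<lambda>M. M $ i $ j"] by (simp add: transpose_def)
  have "bilin u B y = (\<Sum>i\<in>UNIV. \<Sum>j\<in>UNIV. u $ i * (B $ i $ j * y $ j))"
    by (simp add: bilin_def matrix_vector_mult_def sum_distrib_left del: mult_bit_eq_and add_bit_eq_xor)
  also have "\<dots> = (\<Sum>j\<in>UNIV. \<Sum>i\<in>UNIV. u $ i * (B $ i $ j * y $ j))"
    by (rule sum.swap)
  also have "\<dots> = dt (B *v u) y"
    by (simp add: dt_def matrix_vector_mult_def sum_distrib_left sym mult.commute mult.left_commute del: mult_bit_eq_and add_bit_eq_xor)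
  finally show ?thesis .
qed

lemma dt_comm: "dt u y = dt y u"
  by (simp add: dt_def mult.commute del: mult_bit_eq_and add_bit_eq_xor)

lemma bilin_add_left: "bilin (a + b) M y = bilin a M y + bilin b M y"
  by (simp add: bilin_def distrib_right sum.distrib)

lemma bilin_add_right: "bilin y M (a + b) = bilin y M a + bilin y M b"
  by (simp add: bilin_def matrix_vector_right_distrib distrib_left sum.distrib)

lemma dt_sum_left:
  fixes v :: "'b \<Rightarrow> bit ^ 'n"
  shows "dt (\<Sum>i\<in>F. a i *s v i) y = (\<Sum>i\<in>F. a i * dt (v i) y)"
  by (simp add: dt_def sum_component sum_distrib_right sum_distrib_left mult.assoc sum.swap[of _ UNIV F] del: mult_bit_eq_and add_bit_eq_xor)


theorem lemma4p2:
  fixes r :: nat and x :: "nat \<Rightarrow> bit ^ 'n" and A :: "bit ^ 'n ^ 'n"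
  assumes "even r" and "2 \<le> r" and "r \<le> CARD('n)"
    and "inj_on x {1..r}" and "vec.independent (x ` {1..r})"
    and "A \<in> SGL"
    and "\<forall>i\<in>{1..r}. \<forall>j\<in>{1..r}. bilin (x i) (matrix_inv A) (x j) = 1"
  shows "\<exists>y :: bit ^ 'n. \<exists>s\<in>{1..r}.
           bilin (x s) (matrix_inv A) y = 1 \<and>
           (\<forall>t\<in>{1..r+1} - {s}. bilin ((x(r+1 := y)) t) (matrix_inv A) y = 0)"
proof -
  define B where "B = matrix_inv A"
  have tB: "transpose B = B" and AB: "A ** B = mat 1" and BA: "B ** A = mat 1"
    using inv_props[OF assms(6)] by (auto simp: B_def)
  have injB: "inj ((*v) B)"
    by (rule inj_matrix_vector_mult) (use AB BA in \<open>auto simp: invertible_def\<close>)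
  define u where "u t = B *v x t" for t
  have f: "bilin (x t) B y = dt (u t) y" for t y
    unfolding u_def by (rule bilin_dt[OF tB])
  define q where "q y = bilin y B y" for y
  have qadd: "q (a + b) = q a + q b" for a b
  proof -
    have "bilin b B a = bilin a B b"
      using bilin_dt[OF tB, of b a] dt_comm by (simp add: bilin_def dt_def)
    then show ?thesis unfolding q_def
      by (simp add: bilin_add_left bilin_add_right add.assoc bit_add_self
          del: mult_bit_eq_and add_bit_eq_xor)
  qed
  define c where "c = (\<chi> k. q (axis k 1))"
  have qc: "q y = dt c y" for y
    using additive_dt[of q, OF qadd] dt_comm unfolding c_def by metis
  define U where "U = u ` {1..r}"
  have Ueq: "U = (*v) B ` (x ` {1..r})" unfolding U_def u_def by auto
  have indU: "vec.independent U"
    unfolding Ueq using vec.independent_inj_image assms(5) injB by blast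
  have uinj: "inj_on u {1..r}"
    using assms(4) injB unfolding u_def inj_on_def inj_def by blast
  have finU: "finite U" unfolding U_def by simp
  have cardU: "card U = r" unfolding U_def using card_image[OF uinj] by simp
  have key: "\<exists>s\<in>{1..r}. \<exists>y. dt (u s) y = 1 \<and> (\<forall>t\<in>{1..r} - {s}. dt (u t) y = 0) \<and> dt c y = 0"
  proof (cases "c \<in> vec.span U")
    case False
    have ind2: "vec.independent (insert c U)" using vec.independent_insertI[OF False indU] .
    have s1: "(1::nat) \<in> {1..r}" using assms(2) by auto
    have "u 1 \<in> insert c U" unfolding U_def using s1 by auto
    from dual_exists[OF ind2 this] obtain y where
      y: "dt (u 1) y = 1" "\<forall>t\<in>insert c U - {u 1}. dt t y = 0" by blast
    have cne: "c \<noteq> u 1" using False s1 vec.span_base unfolding U_def by blast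
    show ?thesis
    proof (intro bexI[OF _ s1] exI[of _ y] conjI ballI)
      show "dt (u 1) y = 1" by (rule y(1))
      show "dt c y = 0" using y(2) cne by auto
      fix t assume t: "t \<in> {1..r} - {1}"
      then have "u t \<noteq> u 1" using uinj s1 unfolding inj_on_def by blast
      then show "dt (u t) y = 0" using y(2) t unfolding U_def by auto
    qed
  next
    case True
    then obtain a where ca: "c = (\<Sum>v\<in>U. a v *s v)"
      using vec.span_finite[OF finU] by blast
    have dtc: "dt c y = (\<Sum>v\<in>U. a v * dt v y)" for y
      unfolding ca by (rule dt_sum_left)
    have "\<exists>v\<in>U. a v = 0"
    proof (rule ccontr)
      assume "\<not> ?thesis"
      then have a1: "\<forall>v\<in>U. a v = 1" by auto
      have r1: "1 \<in> {1..r}" using assms(2) by auto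
      have "1 = q (x 1)" using assms(7) r1 unfolding q_def B_def by auto
      also have "\<dots> = (\<Sum>v\<in>U. a v * dt v (x 1))" using qc dtc by simp
      also have "\<dots> = (\<Sum>v\<in>U. 1)"
      proof (rule sum.cong[OF refl])
        fix v assume "v \<in> U"
        then obtain i where i: "i \<in> {1..r}" "v = u i" unfolding U_def by auto
        have "dt v (x 1) = 1" using f[of i "x 1"] assms(7) i r1 unfolding B_def by simp
        then show "a v * dt v (x 1) = 1" using a1 \<open>v \<in> U\<close> by simp
      qed
      also have "\<dots> = of_nat r" using cardU by simp
      also have "\<dots> = 0" using assms(1) by (auto elim!: evenE)
      finally show False by simp
    qed
    then obtain s where s: "s \<in> {1..r}" "a (u s) = 0" unfolding U_def by auto
    have "u s \<in> U" using s unfolding U_def by auto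
    from dual_exists[OF indU this] obtain y where
      y: "dt (u s) y = 1" "\<forall>t\<in>U - {u s}. dt t y = 0" by blast
    show ?thesis
    proof (intro bexI[OF _ s(1)] exI[of _ y] conjI ballI)
      show "dt (u s) y = 1" by (rule y(1))
      show "dt c y = 0" unfolding dtc
        by (rule sum.neutral) (use y(2) s(2) in auto)
      fix t assume t: "t \<in> {1..r} - {s}"
      then have "u t \<noteq> u s" using uinj s unfolding inj_on_def by blast
      then show "dt (u t) y = 0" using y(2) t unfolding U_def by auto
    qed
  qed
  then obtain s y where s: "s \<in> {1..r}" and y: "dt (u s) y = 1"
    "\<forall>t\<in>{1..r} - {s}. dt (u t) y = 0" "dt c y = 0" by blast
  show ?thesis
  proof (intro exI[of _ y] bexI[OF _ s] conjI ballI)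
    show "bilin (x s) (matrix_inv A) y = 1" using f y(1) unfolding B_def by simp
    fix t assume t: "t \<in> {1..r + 1} - {s}"
    show "bilin ((x(r + 1 := y)) t) (matrix_inv A) y = 0"
    proof (cases "t = r + 1")
      case True
      then show ?thesis using qc y(3) unfolding q_def B_def by simp
    next
      case False
      then have "t \<in> {1..r} - {s}" using t by auto
      then show ?thesis using False f y(2) unfolding B_def by simp
    qed
  qed
qed

end
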